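(* Let $N\ge1$ be the number of rounds of \texttt{DEVI}$(\gamma,\mathcal P,N)$. Then $Q^{(N-1)}(s,a)-Q^{(N)}(s,a)\le\gamma^{N-1}$ for all $(s,a)\in\mathcal S\times\mathcal A$.
   Context: Finite $\mathcal S,\mathcal A$, reward $r:\mathcal S\times\mathcal A\to[0,1]$, sets $\mathcal S_{s,a}\subseteq\mathcal S$, $\gamma\in[0,1)$. $\mathcal P$ is a nonempty compact set (the confidence polytope given as input) of vectors $p\in[0,1]^{\mathcal S\times\mathcal A\times\mathcal S}$ with $\sum_{s'\in\mathcal S_{s,a}}p_{s,a,s'}=1$ for all $(s,a)$. \texttt{DEVI}$(\gamma,\mathcal P,N)$: $Q^{(0)}(s,a)=1/(1-\gamma)$; for $n=1,\dots,N$: $V^{(n-1)}(s)=\max_aQ^{(n-1)}(s,a)$ and $Q^{(n)}(s,a)=r(s,a)+\gamma\max_{p\in\mathcal P}\sum_{s'\in\mathcal S_{s,a}}p_{s,a,s'}V^{(n-1)}(s')$. *)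

theory Defs
  imports "HOL-Analysis.Analysis"
begin

definition devi_V :: "('s \<Rightarrow> 'a::finite \<Rightarrow> real) \<Rightarrow> 's \<Rightarrow> real" where
  "devi_V Q s = Max (range (Q s))"

text \<open>Transition vectors p are functions on S x A x S (product topology); the maximum
  over the compact set P is written as a supremum (it is attained).\<close>
primrec devi_Q :: "real \<Rightarrow> (('s \<times> 'a \<times> 's) \<Rightarrow> real) set \<Rightarrow> ('s \<Rightarrow> 'a \<Rightarrow> real)
    \<Rightarrow> ('s \<Rightarrow> 'a \<Rightarrow> 's set) \<Rightarrow> nat \<Rightarrow> 's \<Rightarrow> 'a::finite \<Rightarrow> real" where
  "devi_Q \<gamma> P r Ssa 0 = (\<lambda>s a. 1 / (1 - \<gamma>))"
| "devi_Q \<gamma> P r Ssa (Suc n) = (\<lambda>s a. r s a + \<gamma> *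
      (SUP p\<in>P. \<Sum>s'\<in>Ssa s a. p (s, a, s') * devi_V (devi_Q \<gamma> P r Ssa n) s'))"

end

theory Submission
  imports Defs
begin

lemma sup_diff_bound:
  fixes f g :: "'b \<Rightarrow> real"
  assumes "P \<noteq> {}" "bdd_above (f ` P)" "bdd_above (g ` P)"
    and "\<And>p. p \<in> P \<Longrightarrow> \<bar>f p - g p\<bar> \<le> c"
  shows "\<bar>(SUP p\<in>P. f p) - (SUP p\<in>P. g p)\<bar> \<le> c"
proof -
  have 1: "(SUP p\<in>P. f p) \<le> (SUP p\<in>P. g p) + c"
  proof (rule cSUP_least[OF assms(1)])
    fix p assume p: "p \<in> P"
    have "f p \<le> g p + c" using assms(4)[OF p] by linarith
    also have "g p \<le> (SUP p\<in>P. g p)" by (rule cSUP_upper[OF p assms(3)])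
    finally show "f p \<le> (SUP p\<in>P. g p) + c" by linarith
  qed
  have 2: "(SUP p\<in>P. g p) \<le> (SUP p\<in>P. f p) + c"
  proof (rule cSUP_least[OF assms(1)])
    fix p assume p: "p \<in> P"
    have "g p \<le> f p + c" using assms(4)[OF p] by linarith
    also have "f p \<le> (SUP p\<in>P. f p)" by (rule cSUP_upper[OF p assms(2)])
    finally show "g p \<le> (SUP p\<in>P. f p) + c" by linarith
  qed
  from 1 2 show ?thesis by linarith
qed

lemma V_diff_bound:
  fixes Q Q' :: "'s \<Rightarrow> 'a::finite \<Rightarrow> real"
  assumes "\<And>s a. \<bar>Q s a - Q' s a\<bar> \<le> c"
  shows "\<bar>devi_V Q s - devi_V Q' s\<bar> \<le> c"
proof -
  have "\<And>Q Q' :: 's \<Rightarrow> 'a \<Rightarrow> real. (\<And>s a. \<bar>Q s a - Q' s a\<bar> \<le> c) \<Longrightarrow> devi_V Q s \<le> devi_V Q' s + c"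
  proof -
    fix Q Q' :: "'s \<Rightarrow> 'a \<Rightarrow> real"
    assume h: "\<And>s a. \<bar>Q s a - Q' s a\<bar> \<le> c"
    have "Max (range (Q s)) \<in> range (Q s)" by (rule Max_in) auto
    then obtain a0 where a0: "Max (range (Q s)) = Q s a0" by (metis rangeE)
    have "Q' s a0 \<le> Max (range (Q' s))" by (rule Max_ge) auto
    moreover have "Q s a0 \<le> Q' s a0 + c" using h[of s a0] by linarith
    ultimately show "devi_V Q s \<le> devi_V Q' s + c" unfolding devi_V_def using a0 by linarith
  qed
  from this[of Q Q'] this[of Q' Q] assms show ?thesis
    by (smt (verit) abs_minus_commute)
qed

lemma sum_bdd:
  fixes V :: "'s \<Rightarrow> real" and P :: "(('s \<times> 'a \<times> 's) \<Rightarrow> real) set"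
  assumes "\<And>p x. p \<in> P \<Longrightarrow> 0 \<le> p x \<and> p x \<le> 1"
  shows "bdd_above ((\<lambda>p. \<Sum>s'\<in>S. p (s, a, s') * V s') ` P)"
proof (rule bdd_aboveI2)
  fix p assume p: "p \<in> P"
  show "(\<Sum>s'\<in>S. p (s, a, s') * V s') \<le> (\<Sum>s'\<in>S. \<bar>V s'\<bar>)"
  proof (rule sum_mono)
    fix s' 
    have "0 \<le> p (s,a,s')" "p (s,a,s') \<le> 1" using assms[OF p] by auto
    then have "\<bar>p (s, a, s') * V s'\<bar> \<le> \<bar>V s'\<bar>"
      by (simp add: abs_mult mult_left_le_one_le)
    then show "p (s, a, s') * V s' \<le> \<bar>V s'\<bar>" by linarith
  qed
qed

theorem lemma22:
  fixes \<gamma> :: real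
    and P :: "(('s::finite \<times> 'a::finite \<times> 's) \<Rightarrow> real) set"
    and r :: "'s \<Rightarrow> 'a \<Rightarrow> real"
    and Ssa :: "'s \<Rightarrow> 'a \<Rightarrow> 's set"
    and N :: nat and s :: 's and a :: 'a
  assumes r_range: "\<And>s a. 0 \<le> r s a \<and> r s a \<le> 1"
    and gamma: "0 \<le> \<gamma>" "\<gamma> < 1"
    and P_ne: "P \<noteq> {}"
    and P_compact: "compact P"
    and P_range: "\<And>p x. p \<in> P \<Longrightarrow> 0 \<le> p x \<and> p x \<le> 1"
    and P_sum: "\<And>p s a. p \<in> P \<Longrightarrow> (\<Sum>s'\<in>Ssa s a. p (s, a, s')) = 1"
    and N: "N \<ge> 1"
  shows "devi_Q \<gamma> P r Ssa (N - 1) s a - devi_Q \<gamma> P r Ssa N s a \<le> \<gamma> ^ (N - 1)"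
proof -
  let ?Q = "devi_Q \<gamma> P r Ssa"
  have main: "\<forall>s a. \<bar>?Q n s a - ?Q (Suc n) s a\<bar> \<le> \<gamma> ^ n" for n
  proof (induction n)
    case 0
    show ?case
    proof (intro allI)
      fix s a
      have V0: "devi_V (\<lambda>s a. 1 / (1 - \<gamma>)) s' = 1 / (1 - \<gamma>)" for s'
        by (simp add: devi_V_def)
      have "(\<Sum>s'\<in>Ssa s a. p (s, a, s') * devi_V (?Q 0) s') = 1 / (1 - \<gamma>)" if "p \<in> P" for p
        using P_sum[OF that, of s a] by (simp add: V0 sum_divide_distrib[symmetric])
      then have "(SUP p\<in>P. \<Sum>s'\<in>Ssa s a. p (s, a, s') * devi_V (?Q 0) s') = 1 / (1 - \<gamma>)"
        using P_ne by (simp add: cSUP_const cong: SUP_cong)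
      then have "?Q 1 s a = r s a + \<gamma> / (1 - \<gamma>)" by simp
      moreover have "1 / (1 - \<gamma>) - \<gamma> / (1 - \<gamma>) = 1" using gamma by (simp add: field_simps)
      ultimately show "\<bar>?Q 0 s a - ?Q (Suc 0) s a\<bar> \<le> \<gamma> ^ 0"
        using r_range[of s a] by simp
    qed
  next
    case (Suc n)
    show ?case
    proof (intro allI)
      fix s a
      have Vb: "\<bar>devi_V (?Q n) s' - devi_V (?Q (Suc n)) s'\<bar> \<le> \<gamma> ^ n" for s'
        by (rule V_diff_bound) (use Suc in blast)
      let ?f = "\<lambda>p. \<Sum>s'\<in>Ssa s a. p (s, a, s') * devi_V (?Q n) s'"
      let ?g = "\<lambda>p. \<Sum>s'\<in>Ssa s a. p (s, a, s') * devi_V (?Q (Suc n)) s'"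
      have fg: "\<bar>?f p - ?g p\<bar> \<le> \<gamma> ^ n" if p: "p \<in> P" for p
      proof -
        have "\<bar>?f p - ?g p\<bar> = \<bar>\<Sum>s'\<in>Ssa s a. p (s, a, s') * (devi_V (?Q n) s' - devi_V (?Q (Suc n)) s')\<bar>"
          by (simp add: sum_subtractf right_diff_distrib)
        also have "\<dots> \<le> (\<Sum>s'\<in>Ssa s a. \<bar>p (s, a, s') * (devi_V (?Q n) s' - devi_V (?Q (Suc n)) s')\<bar>)"
          by (rule sum_abs)
        also have "\<dots> \<le> (\<Sum>s'\<in>Ssa s a. p (s, a, s') * \<gamma> ^ n)"
        proof (rule sum_mono)
          fix s'
          have "0 \<le> p (s,a,s')" using P_range[OF p] by auto
          then show "\<bar>p (s, a, s') * (devi_V (?Q n) s' - devi_V (?Q (Suc n)) s')\<bar> \<le> p (s, a, s') * \<gamma> ^ n"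
            using Vb[of s'] by (simp add: abs_mult mult_left_mono)
        qed
        also have "\<dots> = \<gamma> ^ n" using P_sum[OF p, of s a] by (simp add: sum_distrib_right[symmetric])
        finally show ?thesis .
      qed
      have "\<bar>(SUP p\<in>P. ?f p) - (SUP p\<in>P. ?g p)\<bar> \<le> \<gamma> ^ n"
        by (rule sup_diff_bound[OF P_ne sum_bdd sum_bdd fg]) (use P_range in auto)
      then have "\<gamma> * \<bar>(SUP p\<in>P. ?f p) - (SUP p\<in>P. ?g p)\<bar> \<le> \<gamma> * \<gamma> ^ n"
        using gamma by (simp add: mult_left_mono)
      moreover have "?Q (Suc n) s a - ?Q (Suc (Suc n)) s a = \<gamma> * ((SUP p\<in>P. ?f p) - (SUP p\<in>P. ?g p))"
        by (simp add: algebra_simps)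
      ultimately show "\<bar>?Q (Suc n) s a - ?Q (Suc (Suc n)) s a\<bar> \<le> \<gamma> ^ Suc n"
        using gamma by (simp add: abs_mult)
    qed
  qed
  obtain m where m: "N = Suc m" using N by (cases N) auto
  have "\<bar>?Q m s a - ?Q (Suc m) s a\<bar> \<le> \<gamma> ^ m" using main by blast
  then have "?Q m s a - ?Q (Suc m) s a \<le> \<gamma> ^ m" by linarith
  then show ?thesis unfolding m diff_Suc_1 .
qed

end
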